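(* Let $\Omega$ be a region of $\mathcal{C}^*_{n,A}$ and $\bm x\in\Omega$ with associated permutation $\pi$. (1) If $\bm y\in\Omega$ has associated permutation $\sigma$, then the partitions $p_\pi(\Omega)$ (computed from $\bm x$) and $p_\sigma(\Omega)$ (computed from $\bm y$) are equivalent. (2) Conversely, if $\sigma\in\mathfrak{S}_n$ admits a partition into consecutive subwords that is equivalent to $p_\pi(\Omega)$, then there exists $\bm y\in\Omega$ whose associated permutation is $\sigma$.
   Context: Let $A=\{a_1,\dots,a_m\}$ with $a_1>\dots>a_m>0$; $\mathcal{C}^*_{n,A}$ is the arrangement in $\mathbb{R}^n$ of hyperplanes $x_i-x_j=a_k$ ($i\ne j$, $1\le k\le m$), and regions are connected components of the complement. The associated permutation of $\bm x$ is the unique $\pi\in\mathfrak{S}_n$ with $x_{\pi(1)}\ge\dots\ge x_{\pi(n)}$ and $\pi^{-1}(i)<\pi^{-1}(j)$ whenever $i<j$ and $x_i=x_j$. Given $\bm x$ with associated permutation $\pi$, let $M_k$ ($1\le k\le m$) be the matrix $(\operatorname{sgn}(x_{\pi(s)}-x_{\pi(t)}-a_k))_{s,t\in[n]}$. Positions $s,t$ are equivalent if for every $k$ rows $s,t$ of $M_k$ have equally many $+$ entries and columns $s,t$ of $M_k$ have equally many $+$ entries; the classes are intervals of consecutive positions, and $p_\pi(\Omega)$ is the partition of the word $\pi(1)\cdots\pi(n)$ into the corresponding consecutive subwords (blocks). A partition of a permutation word into consecutive subwords $B_1|\cdots|B_s$ and a partition $C_1|\cdots|C_t$ of another permutation word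 are equivalent if $s=t$ and $C_j$ consists of exactly the same letters as $B_j$ for every $j$. *)

theory Defs
  imports "HOL-Analysis.Analysis" "HOL-Combinatorics.Permutations"
begin

(* Points of R^n are functions x :: nat => real with coordinates 0..n-1 (x i = 0 for i >= n);
   the topology is the product topology restricted to this copy of R^n. *)
definition Rn :: "nat \<Rightarrow> (nat \<Rightarrow> real) set" where
  "Rn n = {x. \<forall>i\<ge>n. x i = 0}"

definition arr_complement :: "nat \<Rightarrow> real set \<Rightarrow> (nat \<Rightarrow> real) set" where
  "arr_complement n A = {x \<in> Rn n. \<forall>i<n. \<forall>j<n. i \<noteq> j \<longrightarrow> (\<forall>a\<in>A. x i - x j \<noteq> a)}"

definition is_region :: "nat \<Rightarrow> real set \<Rightarrow> (nat \<Rightarrow> real) set \<Rightarrow> bool" where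
  "is_region n A \<Omega> \<longleftrightarrow> \<Omega> \<in> components (arr_complement n A)"

definition assoc_perm :: "nat \<Rightarrow> (nat \<Rightarrow> real) \<Rightarrow> (nat \<Rightarrow> nat) \<Rightarrow> bool" where
  "assoc_perm n x \<pi> \<longleftrightarrow> \<pi> permutes {..<n} \<and>
     (\<forall>s t. s < t \<and> t < n \<longrightarrow> x (\<pi> s) \<ge> x (\<pi> t)) \<and>
     (\<forall>i j. i < j \<and> j < n \<and> x i = x j \<longrightarrow> inv \<pi> i < inv \<pi> j)"

(* number of + entries in row s / column s of M_k = (sgn(x_{pi s} - x_{pi t} - a))_{s,t} *)
definition row_plus :: "nat \<Rightarrow> (nat \<Rightarrow> real) \<Rightarrow> (nat \<Rightarrow> nat) \<Rightarrow> real \<Rightarrow> nat \<Rightarrow> nat" where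
  "row_plus n x \<pi> a s = card {t. t < n \<and> sgn (x (\<pi> s) - x (\<pi> t) - a) = 1}"

definition col_plus :: "nat \<Rightarrow> (nat \<Rightarrow> real) \<Rightarrow> (nat \<Rightarrow> nat) \<Rightarrow> real \<Rightarrow> nat \<Rightarrow> nat" where
  "col_plus n x \<pi> a t = card {s. s < n \<and> sgn (x (\<pi> s) - x (\<pi> t) - a) = 1}"

definition pos_equiv :: "nat \<Rightarrow> real set \<Rightarrow> (nat \<Rightarrow> real) \<Rightarrow> (nat \<Rightarrow> nat) \<Rightarrow> nat \<Rightarrow> nat \<Rightarrow> bool" where
  "pos_equiv n A x \<pi> s t \<longleftrightarrow> (\<forall>a\<in>A. row_plus n x \<pi> a s = row_plus n x \<pi> a t \<and>
                                        col_plus n x \<pi> a s = col_plus n x \<pi> a t)"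

(* a partition of a word of length n into consecutive subwords is given by the list of
   block lengths (a composition of n) *)
definition composition :: "nat \<Rightarrow> nat list \<Rightarrow> bool" where
  "composition n ls \<longleftrightarrow> (\<forall>l\<in>set ls. l > 0) \<and> sum_list ls = n"

definition block_pos :: "nat list \<Rightarrow> nat \<Rightarrow> nat set" where
  "block_pos ls j = {sum_list (take j ls) ..< sum_list (take (Suc j) ls)}"

definition block_letters :: "(nat \<Rightarrow> nat) \<Rightarrow> nat list \<Rightarrow> nat set list" where
  "block_letters \<pi> ls = map (\<lambda>j. \<pi> ` block_pos ls j) [0..<length ls]"

(* ls describes p_pi(Omega) computed from x: its blocks are exactly the equivalence classes *)
definition is_p_partition :: "nat \<Rightarrow> real set \<Rightarrow> (nat \<Rightarrow> real) \<Rightarrow> (nat \<Rightarrow> nat) \<Rightarrow> nat list \<Rightarrow> bool" where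
  "is_p_partition n A x \<pi> ls \<longleftrightarrow> composition n ls \<and>
     (\<forall>s<n. \<forall>t<n. (\<exists>j<length ls. s \<in> block_pos ls j \<and> t \<in> block_pos ls j) \<longleftrightarrow> pos_equiv n A x \<pi> s t)"

definition part_equiv :: "nat set list \<Rightarrow> nat set list \<Rightarrow> bool" where
  "part_equiv B C \<longleftrightarrow> length B = length C \<and> (\<forall>j<length B. C ! j = B ! j)"

end

theory Submission
  imports Defs
begin


lemma region_cc:
  assumes "is_region n A \<Omega>" "x \<in> \<Omega>"
  shows "\<Omega> = connected_component_set (arr_complement n A) x"
proof -
  obtain x0 where "x0 \<in> arr_complement n A" "\<Omega> = connected_component_set (arr_complement n A) x0"
    using assms(1) unfolding is_region_def components_iff by blast
  then show ?thesis using assms(2) connected_component_eq by blast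
qed

lemma pattern_same:
  assumes "is_region n A \<Omega>" "x \<in> \<Omega>" "y \<in> \<Omega>" "i < n" "u < n" "a \<in> A" "a > 0"
  shows "x i - x u > a \<longleftrightarrow> y i - y u > a"
proof (cases "i = u")
  case True then show ?thesis using assms by simp
next
  case False
  have conn: "connected \<Omega>" and sub: "\<Omega> \<subseteq> arr_complement n A"
    using assms(1) unfolding is_region_def by (auto dest: in_components_connected in_components_subset)
  let ?f = "\<lambda>z::nat\<Rightarrow>real. z i - z u"
  have "continuous_on \<Omega> ?f"
    by (intro continuous_intros continuous_on_subset[OF continuous_on_product_coordinates]) auto
  then have c: "connected (?f ` \<Omega>)" using conn connected_continuous_image by blast
  have ne: "\<And>z. z \<in> \<Omega> \<Longrightarrow> ?f z \<noteq> a"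
    using sub False assms(4,5,6) unfolding arr_complement_def by blast
  have nI: "\<And>p q. p \<in> \<Omega> \<Longrightarrow> q \<in> \<Omega> \<Longrightarrow> ?f p \<le> a \<Longrightarrow> a \<le> ?f q \<Longrightarrow> False"
  proof -
    fix p q assume "p \<in> \<Omega>" "q \<in> \<Omega>" "?f p \<le> a" "a \<le> ?f q"
    then have "a \<in> ?f ` \<Omega>" using c unfolding connected_iff_interval by blast
    then show False using ne by auto
  qed
  show ?thesis
  proof
    assume "x i - x u > a" then show "y i - y u > a"
      using nI[of y x] assms(2,3) by force
  next
    assume "y i - y u > a" then show "x i - x u > a"
      using nI[of x y] assms(2,3) by force
  qed
qed



definition Tw :: "nat \<Rightarrow> real set \<Rightarrow> (nat \<Rightarrow> real) \<Rightarrow> nat \<Rightarrow> nat \<Rightarrow> bool" where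
  "Tw n A z i u \<longleftrightarrow> (\<forall>a\<in>A. \<forall>v<n. (z i - z v > a \<longleftrightarrow> z u - z v > a) \<and> (z v - z i > a \<longleftrightarrow> z v - z u > a))"

lemma sgn1: "sgn (v::real) = 1 \<longleftrightarrow> v > 0" by (simp add: sgn_if)

lemma card_sub_iff: "finite B \<Longrightarrow> C \<subseteq> B \<Longrightarrow> card C = card B \<longleftrightarrow> C = B"
  using card_subset_eq by blast

lemma pos_equiv_Tw_le:
  assumes perm: "\<rho> permutes {..<n}" and mono: "\<forall>s t. s<t \<and> t<n \<longrightarrow> z(\<rho> t) \<le> z(\<rho> s)"
    and "p \<le> q" "q < n"
  shows "pos_equiv n A z \<rho> p q \<longleftrightarrow> Tw n A z (\<rho> p) (\<rho> q)"
proof -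
  have zq: "z (\<rho> q) \<le> z (\<rho> p)" using mono assms(3,4) by (cases "p = q") auto
  have surj: "\<And>v. v < n \<Longrightarrow> \<exists>t<n. v = \<rho> t"
    by (metis lessThan_iff perm permutes_inverses(1) permutes_inv permutes_in_image)
  have rho_lt: "\<And>t. t < n \<Longrightarrow> \<rho> t < n"
    using perm permutes_in_image by fastforce
  have allv: "\<And>P. (\<forall>t<n. P (\<rho> t)) \<longleftrightarrow> (\<forall>v<n. P v)"
    using surj rho_lt by metis
  have row: "row_plus n z \<rho> a p = row_plus n z \<rho> a q \<longleftrightarrow>
      (\<forall>v<n. z (\<rho> p) - z v > a \<longleftrightarrow> z (\<rho> q) - z v > a)" for a
  proof -
    let ?Rp = "{t. t < n \<and> sgn (z (\<rho> p) - z (\<rho> t) - a) = 1}"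
    let ?Rq = "{t. t < n \<and> sgn (z (\<rho> q) - z (\<rho> t) - a) = 1}"
    have "?Rq \<subseteq> ?Rp" using zq by (auto simp: sgn1)
    then have "card ?Rq = card ?Rp \<longleftrightarrow> ?Rq = ?Rp" by (intro card_sub_iff) auto
    also have "\<dots> \<longleftrightarrow> (\<forall>t<n. z (\<rho> p) - z (\<rho> t) > a \<longleftrightarrow> z (\<rho> q) - z (\<rho> t) > a)"
      by (auto simp: sgn1 set_eq_iff)
    also have "\<dots> \<longleftrightarrow> (\<forall>v<n. z (\<rho> p) - z v > a \<longleftrightarrow> z (\<rho> q) - z v > a)"
      using allv[of "\<lambda>v. z (\<rho> p) - z v > a \<longleftrightarrow> z (\<rho> q) - z v > a"] .
    finally show ?thesis unfolding row_plus_def by auto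
  qed
  have col: "col_plus n z \<rho> a p = col_plus n z \<rho> a q \<longleftrightarrow>
      (\<forall>v<n. z v - z (\<rho> p) > a \<longleftrightarrow> z v - z (\<rho> q) > a)" for a
  proof -
    let ?Rp = "{s. s < n \<and> sgn (z (\<rho> s) - z (\<rho> p) - a) = 1}"
    let ?Rq = "{s. s < n \<and> sgn (z (\<rho> s) - z (\<rho> q) - a) = 1}"
    have "?Rp \<subseteq> ?Rq" using zq by (auto simp: sgn1)
    then have "card ?Rp = card ?Rq \<longleftrightarrow> ?Rp = ?Rq" by (intro card_sub_iff) auto
    also have "\<dots> \<longleftrightarrow> (\<forall>t<n. z (\<rho> t) - z (\<rho> p) > a \<longleftrightarrow> z (\<rho> t) - z (\<rho> q) > a)"
      by (auto simp: sgn1 set_eq_iff)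
    also have "\<dots> \<longleftrightarrow> (\<forall>v<n. z v - z (\<rho> p) > a \<longleftrightarrow> z v - z (\<rho> q) > a)"
      using allv[of "\<lambda>v. z v - z (\<rho> p) > a \<longleftrightarrow> z v - z (\<rho> q) > a"] .
    finally show ?thesis unfolding col_plus_def by auto
  qed
  show ?thesis unfolding pos_equiv_def Tw_def using row col by blast
qed

lemma Tw_sym: "Tw n A z i u \<Longrightarrow> Tw n A z u i" unfolding Tw_def by blast
lemma Tw_trans: "Tw n A z i u \<Longrightarrow> Tw n A z u w \<Longrightarrow> Tw n A z i w" unfolding Tw_def by blast
lemma Tw_refl: "Tw n A z i i" unfolding Tw_def by blast
lemma pos_equiv_sym: "pos_equiv n A z \<rho> p q \<Longrightarrow> pos_equiv n A z \<rho> q p" unfolding pos_equiv_def by simp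

lemma pos_equiv_Tw:
  assumes perm: "\<rho> permutes {..<n}" and mono: "\<forall>s t. s<t \<and> t<n \<longrightarrow> z(\<rho> t) \<le> z(\<rho> s)"
    and "p < n" "q < n"
  shows "pos_equiv n A z \<rho> p q \<longleftrightarrow> Tw n A z (\<rho> p) (\<rho> q)"
proof (cases "p \<le> q")
  case True then show ?thesis using pos_equiv_Tw_le[OF perm mono] assms by blast
next
  case False
  then have "pos_equiv n A z \<rho> q p \<longleftrightarrow> Tw n A z (\<rho> q) (\<rho> p)"
    using pos_equiv_Tw_le[OF perm mono] assms by simp
  then show ?thesis using pos_equiv_sym Tw_sym by metis
qed



lemma take_sum_mono: "a \<le> b \<Longrightarrow> sum_list (take a (ls::nat list)) \<le> sum_list (take b ls)"
  using take_add[of a "b - a" ls] by simp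

lemma take_sum_le: "sum_list (take a (ls::nat list)) \<le> sum_list ls"
  by (metis append_take_drop_id le_add1 sum_list_append)

lemma take_Suc_sum: "j < length ls \<Longrightarrow> sum_list (take (Suc j) (ls::nat list)) = sum_list (take j ls) + ls ! j"
  by (simp add: take_Suc_conv_app_nth)

lemma bp_sub: "composition n ls \<Longrightarrow> block_pos ls j \<subseteq> {..<n}"
  unfolding block_pos_def composition_def using take_sum_le[of "Suc j" ls] by auto

lemma card_bp: "j < length ls \<Longrightarrow> card (block_pos ls j) = ls ! j"
  unfolding block_pos_def by (simp add: take_Suc_sum)

lemma bp_disj: "x \<in> block_pos ls j \<Longrightarrow> x \<in> block_pos ls j' \<Longrightarrow> j = j'"
proof (rule ccontr)
  assume a: "x \<in> block_pos ls j" "x \<in> block_pos ls j'" "j \<noteq> j'"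
  show False
  proof (cases "j < j'")
    case True
    then have "sum_list (take (Suc j) ls) \<le> sum_list (take j' ls)" by (intro take_sum_mono) auto
    then show False using a unfolding block_pos_def by auto
  next
    case False
    then have "sum_list (take (Suc j') ls) \<le> sum_list (take j ls)" using a by (intro take_sum_mono) auto
    then show False using a unfolding block_pos_def by auto
  qed
qed

lemma bp_cover: "composition n ls \<Longrightarrow> s < n \<Longrightarrow> \<exists>j<length ls. s \<in> block_pos ls j"
proof (induction ls arbitrary: n s rule: rev_induct)
  case Nil then show ?case by (simp add: composition_def)
next
  case (snoc l ls)
  let ?m = "sum_list ls"
  have c: "composition ?m ls" using snoc.prems unfolding composition_def by auto
  have bp_eq: "block_pos (ls @ [l]) j = block_pos ls j" if "j < length ls" for j
    using that unfolding block_pos_def by simp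
  show ?case
  proof (cases "s < ?m")
    case True
    then obtain j where "j < length ls" "s \<in> block_pos ls j" using snoc.IH[OF c] by blast
    then show ?thesis using bp_eq by (intro exI[of _ j]) auto
  next
    case False
    then have "s \<in> block_pos (ls @ [l]) (length ls)"
      using snoc.prems unfolding block_pos_def composition_def by auto
    then show ?thesis by (intro exI[of _ "length ls"]) auto
  qed
qed



lemma bp_snoc1: "j < length ls \<Longrightarrow> block_pos (ls @ [l]) j = block_pos ls j"
  unfolding block_pos_def by simp
lemma bp_snoc2: "block_pos (ls @ [l]) (length ls) = {sum_list ls ..< sum_list ls + l}"
  unfolding block_pos_def by simp

lemma exist_blocks:
  fixes E :: "nat \<Rightarrow> nat \<Rightarrow> bool"
  assumes refl: "\<forall>s<N. E s s" and sym: "\<forall>s<N. \<forall>t<N. E s t \<longrightarrow> E t s"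
    and trans: "\<forall>s<N. \<forall>t<N. \<forall>u<N. E s t \<longrightarrow> E t u \<longrightarrow> E s u"
    and conv: "\<forall>s u t. s \<le> u \<longrightarrow> u \<le> t \<longrightarrow> t < N \<longrightarrow> E s t \<longrightarrow> E s u"
  shows "m \<le> N \<Longrightarrow> \<exists>ls. composition m ls \<and>
     (\<forall>s<m. \<forall>t<m. (\<exists>j<length ls. s \<in> block_pos ls j \<and> t \<in> block_pos ls j) \<longleftrightarrow> E s t)"
proof (induction m)
  case 0 then show ?case by (intro exI[of _ "[]"]) (auto simp: composition_def)
next
  case (Suc m)
  then obtain ls where comp: "composition m ls" and
     SB: "\<forall>s<m. \<forall>t<m. (\<exists>j<length ls. s \<in> block_pos ls j \<and> t \<in> block_pos ls j) \<longleftrightarrow> E s t"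
    by auto
  have mN: "m < N" using Suc.prems by simp
  show ?case
  proof (cases "m > 0 \<and> E (m - 1) m")
    case True
    then have "ls \<noteq> []" using comp unfolding composition_def by auto
    then obtain bs l where lsd: "ls = bs @ [l]" by (metis rev_exhaust)
    have l0: "l > 0" and msum: "sum_list bs + l = m" using comp lsd unfolding composition_def by auto
    define ls' where "ls' = bs @ [Suc l]"
    have comp': "composition (Suc m) ls'" using comp msum unfolding ls'_def lsd composition_def by auto
    let ?k = "length bs"
    let ?S = "sum_list bs"
    have len: "length ls' = length ls" unfolding ls'_def lsd by simp
    have mem: "s \<in> block_pos ls' j \<longleftrightarrow> s \<in> block_pos ls j" if "j < length ls" "s < m" for s j
    proof (cases "j < ?k")
      case True then show ?thesis unfolding ls'_def lsd by (simp add: bp_snoc1)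
    next
      case False then have "j = ?k" using that lsd by simp
      then show ?thesis unfolding ls'_def lsd using bp_snoc2[of bs] that msum by simp
    qed
    have bk: "block_pos ls' ?k = {?S..<Suc m}" unfolding ls'_def using bp_snoc2[of bs "Suc l"] msum by simp
    have bk0: "block_pos ls ?k = {?S..<m}" unfolding lsd using bp_snoc2[of bs l] msum by simp
    have kl: "?k < length ls" using lsd by simp
    have m1: "m - 1 \<in> block_pos ls ?k" using bk0 l0 msum True by auto
    have keyS: "(\<exists>j<length ls'. s \<in> block_pos ls' j \<and> m \<in> block_pos ls' j) \<longleftrightarrow> E s m"
      if "s < Suc m" for s
    proof -
      have "(\<exists>j<length ls'. s \<in> block_pos ls' j \<and> m \<in> block_pos ls' j) \<longleftrightarrow> s \<in> block_pos ls' ?k"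
      proof
        assume "\<exists>j<length ls'. s \<in> block_pos ls' j \<and> m \<in> block_pos ls' j"
        then obtain j where "s \<in> block_pos ls' j" "m \<in> block_pos ls' j" by blast
        moreover have "m \<in> block_pos ls' ?k" using bk msum by auto
        ultimately show "s \<in> block_pos ls' ?k" using bp_disj[of m ls' j ?k] by simp
      next
        assume "s \<in> block_pos ls' ?k"
        moreover have "m \<in> block_pos ls' ?k" using bk msum by auto
        ultimately show "\<exists>j<length ls'. s \<in> block_pos ls' j \<and> m \<in> block_pos ls' j"
          using kl len by auto
      qed
      also have "\<dots> \<longleftrightarrow> ?S \<le> s" using bk that by auto
      also have "\<dots> \<longleftrightarrow> E s m"
      proof (cases "s = m")
        case True then show ?thesis using refl mN msum by auto
      next
        case False
        then have sm: "s < m" using that by simp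
        have "E s m \<longleftrightarrow> E s (m - 1)" using True sym trans mN sm
          by (metis diff_less less_imp_diff_less less_trans zero_less_one)
        also have "\<dots> \<longleftrightarrow> (\<exists>j<length ls. s \<in> block_pos ls j \<and> m - 1 \<in> block_pos ls j)"
          using SB sm True by auto
        also have "\<dots> \<longleftrightarrow> s \<in> block_pos ls ?k" using m1 kl bp_disj[of "m - 1" ls] by blast
        also have "\<dots> \<longleftrightarrow> ?S \<le> s" using bk0 sm by auto
        finally show ?thesis by simp
      qed
      finally show ?thesis .
    qed
    show ?thesis
    proof (intro exI[of _ ls'] conjI comp' allI impI)
      fix s t assume st: "s < Suc m" "t < Suc m"
      show "(\<exists>j<length ls'. s \<in> block_pos ls' j \<and> t \<in> block_pos ls' j) \<longleftrightarrow> E s t"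
      proof (cases "s < m \<and> t < m")
        case True
        have "(\<exists>j<length ls'. s \<in> block_pos ls' j \<and> t \<in> block_pos ls' j) \<longleftrightarrow>
              (\<exists>j<length ls. s \<in> block_pos ls j \<and> t \<in> block_pos ls j)"
          using mem[of _ s] mem[of _ t] len True by auto
        then show ?thesis using SB True by auto
      next
        case False
        then consider "t = m" | "s = m" using st by linarith
        then show ?thesis
        proof cases
          case 1 then show ?thesis using keyS st by simp
        next
          case 2
          have "E m t \<longleftrightarrow> E t m" using sym st mN 2 by (metis less_Suc_eq less_trans)
          then show ?thesis using keyS[of t] st 2 by blast
        qed
      qed
    qed
  next
    case False
    define ls' where "ls' = ls @ [1]"
    have msum: "sum_list ls = m" using comp unfolding composition_def by auto
    have comp': "composition (Suc m) ls'" using comp unfolding ls'_def composition_def by auto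
    have len: "length ls' = Suc (length ls)" unfolding ls'_def by simp
    have bl: "block_pos ls' (length ls) = {m}" unfolding ls'_def using bp_snoc2[of ls 1] msum by auto
    have mem: "s \<in> block_pos ls' j \<longleftrightarrow> s \<in> block_pos ls j" if "j < length ls" for s j
      unfolding ls'_def using that by (simp add: bp_snoc1)
    have noE: "\<not> E s m" if "s < m" for s
    proof
      assume e: "E s m"
      have "E s (m - 1)" using conv e that mN by (metis Suc_pred' bot_nat_0.extremum_strict diff_le_self less_Suc_eq_le nat_neq_iff)
      then have "E (m - 1) s" using sym that mN by auto
      then have "E (m - 1) m" proof -
        have "m - 1 < N" "s < N" using that mN by auto
        then show ?thesis using trans \<open>E (m - 1) s\<close> e mN by blast
      qed
      then show False using False that by auto
    qed
    have keyS: "(\<exists>j<length ls'. s \<in> block_pos ls' j \<and> m \<in> block_pos ls' j) \<longleftrightarrow> E s m"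
      if "s < Suc m" for s
    proof -
      have "(\<exists>j<length ls'. s \<in> block_pos ls' j \<and> m \<in> block_pos ls' j) \<longleftrightarrow> s \<in> block_pos ls' (length ls)"
        using bl bp_disj[of m ls'] len by auto
      also have "\<dots> \<longleftrightarrow> s = m" using bl by auto
      also have "\<dots> \<longleftrightarrow> E s m" using noE refl mN that by (metis less_Suc_eq)
      finally show ?thesis .
    qed
    show ?thesis
    proof (intro exI[of _ ls'] conjI comp' allI impI)
      fix s t assume st: "s < Suc m" "t < Suc m"
      show "(\<exists>j<length ls'. s \<in> block_pos ls' j \<and> t \<in> block_pos ls' j) \<longleftrightarrow> E s t"
      proof (cases "s < m \<and> t < m")
        case True
        have "(\<exists>j<length ls'. s \<in> block_pos ls' j \<and> t \<in> block_pos ls' j) \<longleftrightarrow>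
              (\<exists>j<length ls. s \<in> block_pos ls j \<and> t \<in> block_pos ls j)"
          using mem len bl True by (auto simp: less_Suc_eq)
        then show ?thesis using SB True by auto
      next
        case False
        then consider "t = m" | "s = m" using st by linarith
        then show ?thesis
        proof cases
          case 1 then show ?thesis using keyS st by simp
        next
          case 2
          have "E m t \<longleftrightarrow> E t m" using sym st mN 2 by (metis less_Suc_eq less_trans)
          then show ?thesis using keyS[of t] st 2 by blast
        qed
      qed
    qed
  qed
qed



lemma Tw_eq: "z i = z u \<Longrightarrow> Tw n A z i u" unfolding Tw_def by simp

lemma Tw_conv:
  assumes "Tw n A z i u" "z u \<le> z w" "z w \<le> z i"
  shows "Tw n A z i w"
  unfolding Tw_def
proof (intro ballI allI impI conjI)
  fix a v assume av: "a \<in> A" "v < n"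
  have r: "z i - z v > a \<longleftrightarrow> z u - z v > a" and c: "z v - z i > a \<longleftrightarrow> z v - z u > a"
    using assms(1) av unfolding Tw_def by auto
  show "z i - z v > a \<longleftrightarrow> z w - z v > a" using r assms(2,3) by linarith
  show "z v - z i > a \<longleftrightarrow> z v - z w > a" using c assms(2,3) by linarith
qed

definition AboveS :: "nat \<Rightarrow> (nat \<Rightarrow> nat \<Rightarrow> bool) \<Rightarrow> (nat \<Rightarrow> real) \<Rightarrow> nat \<Rightarrow> nat set" where
  "AboveS n T z d = {u. u < n \<and> \<not> T d u \<and> z d < z u}"
definition TwC :: "nat \<Rightarrow> (nat \<Rightarrow> nat \<Rightarrow> bool) \<Rightarrow> nat \<Rightarrow> nat set" where
  "TwC n T d = {u. u < n \<and> T d u}"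

lemma G1:
  assumes perm: "\<rho> permutes {..<n}" and mono: "\<forall>s t. s<t \<and> t<n \<longrightarrow> z(\<rho> t) \<le> z(\<rho> s)"
    and "p < n"
  shows "card (AboveS n T z (\<rho> p)) \<le> p"
proof -
  have "AboveS n T z (\<rho> p) \<subseteq> \<rho> ` {..<p}"
  proof
    fix u assume u: "u \<in> AboveS n T z (\<rho> p)"
    then have un: "u < n" and lt: "z (\<rho> p) < z u" unfolding AboveS_def by auto
    define q where "q = inv \<rho> u"
    have qn: "q < n" unfolding q_def using un perm permutes_inv permutes_in_image by fastforce
    have uq: "u = \<rho> q" unfolding q_def using permutes_inverses(1)[OF perm] by simp
    have "q < p"
    proof (rule ccontr)
      assume "\<not> q < p"
      then have "z (\<rho> q) \<le> z (\<rho> p)" using mono qn by (cases "q = p") auto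
      then show False using lt uq by simp
    qed
    then show "u \<in> \<rho> ` {..<p}" using uq by auto
  qed
  then have "card (AboveS n T z (\<rho> p)) \<le> card (\<rho> ` {..<p})" by (intro card_mono) auto
  also have "\<dots> \<le> p" using card_image_le[of "{..<p}" \<rho>] by simp
  finally show ?thesis .
qed

lemma G2:
  assumes perm: "\<rho> permutes {..<n}" and mono: "\<forall>s t. s<t \<and> t<n \<longrightarrow> z(\<rho> t) \<le> z(\<rho> s)"
    and "p < n" and Teq: "\<And>u. u < n \<Longrightarrow> z (\<rho> p) = z u \<Longrightarrow> T (\<rho> p) u"
  shows "p < card (AboveS n T z (\<rho> p)) + card (TwC n T (\<rho> p))"
proof -
  have sub: "\<rho> ` {..p} \<subseteq> AboveS n T z (\<rho> p) \<union> TwC n T (\<rho> p)"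
  proof
    fix u assume "u \<in> \<rho> ` {..p}"
    then obtain q where q: "q \<le> p" "u = \<rho> q" by auto
    have un: "u < n" using q assms(3) perm permutes_in_image by fastforce
    have ge: "z (\<rho> p) \<le> z u" using mono q assms(3) by (cases "q = p") auto
    show "u \<in> AboveS n T z (\<rho> p) \<union> TwC n T (\<rho> p)"
      using Teq[OF un] ge un unfolding AboveS_def TwC_def by force
  qed
  have inj: "inj_on \<rho> {..p}" using perm permutes_inj_on by blast
  have "Suc p = card (\<rho> ` {..p})" using card_image[OF inj] by simp
  also have "\<dots> \<le> card (AboveS n T z (\<rho> p) \<union> TwC n T (\<rho> p))"
    by (intro card_mono sub) (auto simp: AboveS_def TwC_def)
  also have "\<dots> \<le> card (AboveS n T z (\<rho> p)) + card (TwC n T (\<rho> p))" by (rule card_Un_le)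
  finally show ?thesis by simp
qed

lemma KeyC:
  assumes "c < n" "d < n" "\<not> Tw n A x c d" "x d < x c"
  shows "card (AboveS n (Tw n A x) x c) + card (TwC n (Tw n A x) c) \<le> card (AboveS n (Tw n A x) x d)"
proof -
  let ?T = "Tw n A x"
  have sub: "AboveS n ?T x c \<union> TwC n ?T c \<subseteq> AboveS n ?T x d"
  proof
    fix u assume u: "u \<in> AboveS n ?T x c \<union> TwC n ?T c"
    show "u \<in> AboveS n ?T x d"
    proof (cases "u \<in> TwC n ?T c")
      case True
      then have un: "u < n" and tcu: "?T c u" unfolding TwC_def by auto
      have ndu: "\<not> ?T d u" using tcu assms(3) Tw_sym Tw_trans by metis
      have "x d < x u"
      proof (rule ccontr)
        assume "\<not> x d < x u"
        moreover have "x u \<noteq> x d" using ndu Tw_eq by metis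
        ultimately have "x u \<le> x d" "x d \<le> x c" using assms(4) by auto
        then have "?T c d" using Tw_conv[OF tcu] by blast
        then show False using assms(3) by simp
      qed
      then show ?thesis using un ndu unfolding AboveS_def by auto
    next
      case False
      then have u2: "u \<in> AboveS n ?T x c" using u by auto
      then have un: "u < n" and ncu: "\<not> ?T c u" and lt: "x c < x u" unfolding AboveS_def by auto
      have ndu: "\<not> ?T d u"
      proof
        assume "?T d u"
        then have "?T u d" by (rule Tw_sym)
        then have "?T u c" using Tw_conv[of n A x u d c] lt assms(4) by auto
        then show False using ncu Tw_sym by metis
      qed
      then show ?thesis using un lt assms(4) unfolding AboveS_def by auto
    qed
  qed
  have disj: "AboveS n ?T x c \<inter> TwC n ?T c = {}" unfolding AboveS_def TwC_def by auto
  have "card (AboveS n ?T x c) + card (TwC n ?T c) = card (AboveS n ?T x c \<union> TwC n ?T c)"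
    using disj by (intro card_Un_disjoint[symmetric]) (auto simp: AboveS_def TwC_def)
  also have "\<dots> \<le> card (AboveS n ?T x d)" by (intro card_mono sub) (auto simp: AboveS_def)
  finally show ?thesis .
qed

lemma part1_core:
  assumes ax: "assoc_perm n x \<pi>" and ay: "assoc_perm n y \<sigma>"
    and P: "\<forall>i<n. \<forall>u<n. \<forall>a\<in>A. x i - x u > a \<longleftrightarrow> y i - y u > a"
  shows "\<forall>p<n. Tw n A x (\<sigma> p) (\<pi> p)"
proof (intro allI impI)
  fix p assume pn: "p < n"
  let ?T = "Tw n A x"
  have Txy: "\<And>i u. i < n \<Longrightarrow> u < n \<Longrightarrow> ?T i u \<longleftrightarrow> Tw n A y i u"
    unfolding Tw_def using P by auto
  have permx: "\<pi> permutes {..<n}" and monox: "\<forall>s t. s<t \<and> t<n \<longrightarrow> x(\<pi> t) \<le> x(\<pi> s)"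
    using ax unfolding assoc_perm_def by auto
  have permy: "\<sigma> permutes {..<n}" and monoy: "\<forall>s t. s<t \<and> t<n \<longrightarrow> y(\<sigma> t) \<le> y(\<sigma> s)"
    using ay unfolding assoc_perm_def by auto
  define c where "c = \<sigma> p"
  define d where "d = \<pi> p"
  have cn: "c < n" unfolding c_def using pn permy permutes_in_image by fastforce
  have dn: "d < n" unfolding d_def using pn permx permutes_in_image by fastforce
  have ord: "\<And>c d. c < n \<Longrightarrow> d < n \<Longrightarrow> \<not> ?T c d \<Longrightarrow> (x d < x c \<longleftrightarrow> y d < y c)"
  proof -
    fix c d assume cd: "c < n" "d < n" "\<not> ?T c d"
    then obtain a v where av: "a \<in> A" "v < n"
      "\<not> ((x c - x v > a \<longleftrightarrow> x d - x v > a) \<and> (x v - x c > a \<longleftrightarrow> x v - x d > a))"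
      unfolding Tw_def by blast
    have "x c - x v > a \<longleftrightarrow> y c - y v > a" "x d - x v > a \<longleftrightarrow> y d - y v > a"
         "x v - x c > a \<longleftrightarrow> y v - y c > a" "x v - x d > a \<longleftrightarrow> y v - y d > a"
      using P cd av by auto
    then show "x d < x c \<longleftrightarrow> y d < y c" using av(3) by linarith
  qed
  have AbEq: "AboveS n ?T y c = AboveS n ?T x c"
    unfolding AboveS_def using ord[of _ c] cn Tw_sym by blast
  have g1x: "card (AboveS n ?T x d) \<le> p" unfolding d_def by (rule G1[OF permx monox pn])
  have g1y: "card (AboveS n ?T y c) \<le> p" unfolding c_def by (rule G1[OF permy monoy pn])
  have g2x: "p < card (AboveS n ?T x d) + card (TwC n ?T d)" unfolding d_def
    by (rule G2[OF permx monox pn]) (rule Tw_eq)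
  have g2y: "p < card (AboveS n ?T y c) + card (TwC n ?T c)" unfolding c_def
    by (rule G2[OF permy monoy pn]) (metis Tw_eq Txy c_def cn)
  have g2y': "p < card (AboveS n ?T x c) + card (TwC n ?T c)" using g2y AbEq by simp
  have g1y': "card (AboveS n ?T x c) \<le> p" using g1y AbEq by simp
  show "?T (\<sigma> p) (\<pi> p)"
  proof (rule ccontr)
    assume ncd: "\<not> ?T (\<sigma> p) (\<pi> p)"
    then have ncd': "\<not> ?T c d" unfolding c_def d_def .
    have "x c \<noteq> x d" using ncd' Tw_eq by metis
    then consider "x d < x c" | "x c < x d" by linarith
    then show False
    proof cases
      case 1
      from KeyC[OF cn dn ncd' 1] g1x g2y' show False by linarith
    next
      case 2
      have ndc: "\<not> ?T d c" using ncd' Tw_sym by metis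
      from KeyC[OF dn cn ndc 2] g1y' g2x show False by linarith
    qed
  qed
qed



lemma part1:
  assumes apos: "\<forall>a\<in>A. a > 0" and reg: "is_region n A \<Omega>" and xO: "x \<in> \<Omega>" and ax: "assoc_perm n x \<pi>"
    and yO: "y \<in> \<Omega>" and ay: "assoc_perm n y \<sigma>"
  shows "\<exists>ls1 ls2. is_p_partition n A x \<pi> ls1 \<and> is_p_partition n A y \<sigma> ls2 \<and>
                       part_equiv (block_letters \<pi> ls1) (block_letters \<sigma> ls2)"
proof -
  have P: "\<forall>i<n. \<forall>u<n. \<forall>a\<in>A. x i - x u > a \<longleftrightarrow> y i - y u > a"
    using pattern_same[OF reg xO yO] apos by blast
  have permx: "\<pi> permutes {..<n}" and monox: "\<forall>s t. s<t \<and> t<n \<longrightarrow> x(\<pi> t) \<le> x(\<pi> s)"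
    using ax unfolding assoc_perm_def by auto
  have permy: "\<sigma> permutes {..<n}" and monoy: "\<forall>s t. s<t \<and> t<n \<longrightarrow> y(\<sigma> t) \<le> y(\<sigma> s)"
    using ay unfolding assoc_perm_def by auto
  let ?E = "pos_equiv n A x \<pi>"
  let ?T = "Tw n A x"
  have Txy: "\<And>i u. i < n \<Longrightarrow> u < n \<Longrightarrow> ?T i u \<longleftrightarrow> Tw n A y i u"
    unfolding Tw_def using P by auto
  have pix: "\<And>s. s < n \<Longrightarrow> \<pi> s < n" using permx permutes_in_image by fastforce
  have siy: "\<And>s. s < n \<Longrightarrow> \<sigma> s < n" using permy permutes_in_image by fastforce
  have conv: "\<forall>s u t. s \<le> u \<longrightarrow> u \<le> t \<longrightarrow> t < n \<longrightarrow> ?E s t \<longrightarrow> ?E s u"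
  proof (intro allI impI)
    fix s u t assume h: "s \<le> u" "u \<le> t" "t < n" "?E s t"
    then have "?T (\<pi> s) (\<pi> t)" using pos_equiv_Tw[OF permx monox] by auto
    moreover have "x (\<pi> t) \<le> x (\<pi> u)" using monox h by (cases "u = t") auto
    moreover have "x (\<pi> u) \<le> x (\<pi> s)" using monox h by (cases "s = u") auto
    ultimately have "?T (\<pi> s) (\<pi> u)" using Tw_conv by blast
    then show "?E s u" using pos_equiv_Tw[OF permx monox] h by auto
  qed
  obtain ls where comp: "composition n ls" and
     SB: "\<forall>s<n. \<forall>t<n. (\<exists>j<length ls. s \<in> block_pos ls j \<and> t \<in> block_pos ls j) \<longleftrightarrow> ?E s t"
  proof -
    have r: "\<forall>s<n. ?E s s" unfolding pos_equiv_def by simp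
    have sy: "\<forall>s<n. \<forall>t<n. ?E s t \<longrightarrow> ?E t s" using pos_equiv_sym by blast
    have tr: "\<forall>s<n. \<forall>t<n. \<forall>u<n. ?E s t \<longrightarrow> ?E t u \<longrightarrow> ?E s u"
      unfolding pos_equiv_def by simp
    show ?thesis using exist_blocks[of n ?E n, OF r sy tr conv] that by blast
  qed
  have px: "is_p_partition n A x \<pi> ls" unfolding is_p_partition_def using comp SB by auto
  have core: "\<forall>p<n. ?T (\<sigma> p) (\<pi> p)" by (rule part1_core[OF ax ay P])
  have py: "is_p_partition n A y \<sigma> ls"
    unfolding is_p_partition_def
  proof (intro conjI comp allI impI)
    fix s t assume st: "s < n" "t < n"
    have "(\<exists>j<length ls. s \<in> block_pos ls j \<and> t \<in> block_pos ls j) \<longleftrightarrow> ?T (\<pi> s) (\<pi> t)"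
      using SB st pos_equiv_Tw[OF permx monox] by auto
    also have "\<dots> \<longleftrightarrow> ?T (\<sigma> s) (\<sigma> t)"
    proof -
      have a: "?T (\<sigma> s) (\<pi> s)" "?T (\<sigma> t) (\<pi> t)" using core st by auto
      have b: "?T (\<pi> s) (\<sigma> s)" "?T (\<pi> t) (\<sigma> t)" using a by (auto intro: Tw_sym)
      show ?thesis using a b Tw_trans by meson
    qed
    also have "\<dots> \<longleftrightarrow> Tw n A y (\<sigma> s) (\<sigma> t)" using Txy siy st by auto
    also have "\<dots> \<longleftrightarrow> pos_equiv n A y \<sigma> s t" using pos_equiv_Tw[OF permy monoy] st by auto
    finally show "(\<exists>j<length ls. s \<in> block_pos ls j \<and> t \<in> block_pos ls j) \<longleftrightarrow> pos_equiv n A y \<sigma> s t" .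
  qed
  have beq: "\<sigma> ` block_pos ls j = \<pi> ` block_pos ls j" if jl: "j < length ls" for j
  proof -
    have bsub: "block_pos ls j \<subseteq> {..<n}" using bp_sub[OF comp] .
    have sub: "\<sigma> ` block_pos ls j \<subseteq> \<pi> ` block_pos ls j"
    proof
      fix w assume "w \<in> \<sigma> ` block_pos ls j"
      then obtain p where p: "p \<in> block_pos ls j" "w = \<sigma> p" by auto
      have pn: "p < n" using p bsub by auto
      define q where "q = inv \<pi> (\<sigma> p)"
      have qn: "q < n" unfolding q_def using siy[OF pn] permx permutes_inv permutes_in_image by fastforce
      have pq: "\<pi> q = \<sigma> p" unfolding q_def using permutes_inverses(1)[OF permx] by simp
      have "?T (\<pi> q) (\<pi> p)" using core pn pq by auto
      then have "?E q p" using pos_equiv_Tw[OF permx monox] qn pn by auto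
      then obtain j' where "j' < length ls" "q \<in> block_pos ls j'" "p \<in> block_pos ls j'"
        using SB qn pn by blast
      then have "q \<in> block_pos ls j" using bp_disj[of p ls j j'] p by auto
      then show "w \<in> \<pi> ` block_pos ls j" using p pq by (metis image_eqI)
    qed
    have "card (\<sigma> ` block_pos ls j) = card (block_pos ls j)"
      using card_image[OF permutes_inj_on[OF permy]] by simp
    also have "\<dots> = card (\<pi> ` block_pos ls j)"
      using card_image[OF permutes_inj_on[OF permx]] by simp
    finally show ?thesis using sub card_subset_eq[of "\<pi> ` block_pos ls j"] by (auto simp: block_pos_def)
  qed
  have "block_letters \<sigma> ls = block_letters \<pi> ls" unfolding block_letters_def using beq by auto
  then have "part_equiv (block_letters \<pi> ls) (block_letters \<sigma> ls)" unfolding part_equiv_def by simp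
  then show ?thesis using px py by blast
qed



lemma convex_pos: "(X::real) > 0 \<Longrightarrow> Y > 0 \<Longrightarrow> 0 \<le> t \<Longrightarrow> t \<le> 1 \<Longrightarrow> (1 - t) * X + t * Y > 0"
proof (cases "t < 1")
  case True
  assume "X > 0" "Y > 0" "0 \<le> t"
  then have "(1 - t) * X > 0" "t * Y \<ge> 0" using True by auto
  then show ?thesis by linarith
qed auto

lemma ls_eq:
  assumes cl: "composition n ls" and cl': "composition n ls'" and pi: "\<pi> permutes {..<n}"
    and si: "\<sigma> permutes {..<n}"
    and pe: "part_equiv (block_letters \<pi> ls) (block_letters \<sigma> ls')"
  shows "ls' = ls"
proof -
  have len: "length ls' = length ls" using pe unfolding part_equiv_def block_letters_def by simp
  have im: "\<sigma> ` block_pos ls' j = \<pi> ` block_pos ls j" if "j < length ls" for j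
    using pe that len unfolding part_equiv_def block_letters_def by auto
  show ?thesis
  proof (rule nth_equalityI)
    show "length ls' = length ls" by (rule len)
    fix j assume j: "j < length ls'"
    have "ls' ! j = card (block_pos ls' j)" using card_bp j by metis
    also have "\<dots> = card (\<sigma> ` block_pos ls' j)"
      using card_image[OF permutes_inj_on[OF si]] by simp
    also have "\<dots> = card (\<pi> ` block_pos ls j)" using im j len by simp
    also have "\<dots> = card (block_pos ls j)"
      using card_image[OF permutes_inj_on[OF pi]] by simp
    also have "\<dots> = ls ! j" using card_bp j len by metis
    finally show "ls' ! j = ls ! j" .
  qed
qed

lemma part2:
  assumes finA: "finite A" and apos: "\<forall>a\<in>A. a > 0" and reg: "is_region n A \<Omega>" and xO: "x \<in> \<Omega>"
    and ax: "assoc_perm n x \<pi>" and pp: "is_p_partition n A x \<pi> ls" and si: "\<sigma> permutes {..<n}"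
    and cl': "composition n ls'" and pe: "part_equiv (block_letters \<pi> ls) (block_letters \<sigma> ls')"
  shows "\<exists>y\<in>\<Omega>. assoc_perm n y \<sigma>"
proof -
  let ?C = "arr_complement n A"
  have permx: "\<pi> permutes {..<n}" and monox: "\<forall>s t. s<t \<and> t<n \<longrightarrow> x(\<pi> t) \<le> x(\<pi> s)"
    using ax unfolding assoc_perm_def by auto
  have cl: "composition n ls" and SB: "\<forall>s<n. \<forall>t<n. (\<exists>j<length ls. s \<in> block_pos ls j \<and> t \<in> block_pos ls j) \<longleftrightarrow> pos_equiv n A x \<pi> s t"
    using pp unfolding is_p_partition_def by auto
  have lseq: "ls' = ls" by (rule ls_eq[OF cl cl' permx si pe])
  have im: "\<sigma> ` block_pos ls j = \<pi> ` block_pos ls j" if "j < length ls" for j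
    using pe that lseq unfolding part_equiv_def block_letters_def by auto
  have pix: "\<And>s. s < n \<Longrightarrow> \<pi> s < n" using permx permutes_in_image by fastforce
  have siy: "\<And>s. s < n \<Longrightarrow> \<sigma> s < n" using si permutes_in_image by fastforce
  have isi: "\<And>s. s < n \<Longrightarrow> inv \<sigma> s < n" using si permutes_inv permutes_in_image by fastforce
  have Tps: "Tw n A x (\<pi> p) (\<sigma> p)" if pn: "p < n" for p
  proof -
    obtain j where j: "j < length ls" "p \<in> block_pos ls j" using bp_cover[OF cl pn] by blast
    then have "\<sigma> p \<in> \<pi> ` block_pos ls j" using im by blast
    then obtain q where q: "q \<in> block_pos ls j" "\<sigma> p = \<pi> q" by auto
    have qn: "q < n" using q bp_sub[OF cl] by auto
    have "pos_equiv n A x \<pi> p q" using SB pn qn j q by blast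
    then show ?thesis using pos_equiv_Tw[OF permx monox pn qn] q by simp
  qed
  have xC: "x \<in> ?C" using reg xO unfolding is_region_def by (auto dest: in_components_subset)
  define S where "S = (\<lambda>(k, l, a). \<bar>x k - x l - a\<bar>) ` ({(k, l, a). k < n \<and> l < n \<and> k \<noteq> l \<and> a \<in> A})"
  have finS: "finite S"
  proof -
    have "{(k, l, a). k < n \<and> l < n \<and> k \<noteq> l \<and> a \<in> A} \<subseteq> {..<n} \<times> {..<n} \<times> A" by auto
    then show ?thesis unfolding S_def using finA by (meson finite_SigmaI finite_imageI finite_lessThan finite_subset)
  qed
  define \<delta> where "\<delta> = Min (insert 1 S)"
  have Spos: "\<forall>v\<in>S. v > 0" using xC unfolding S_def arr_complement_def by auto
  have dpos: "\<delta> > 0" unfolding \<delta>_def using finS Spos by auto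
  have dle: "\<delta> \<le> \<bar>x k - x l - a\<bar>" if "k < n" "l < n" "k \<noteq> l" "a \<in> A" for k l a
  proof -
    have "\<bar>x k - x l - a\<bar> \<in> S" unfolding S_def using that by force
    then show ?thesis unfolding \<delta>_def using finS by auto
  qed
  define \<epsilon> where "\<epsilon> = \<delta> / (2 * (real n + 1))"
  have epos: "\<epsilon> > 0" unfolding \<epsilon>_def using dpos by auto
  have esmall: "\<epsilon> * real n < \<delta>"
  proof -
    have "\<epsilon> * real n = \<delta> * (real n / (2 * (real n + 1)))" unfolding \<epsilon>_def by simp
    also have "\<dots> < \<delta> * 1" using dpos by (intro mult_strict_left_mono) auto
    finally show ?thesis by simp
  qed
  define y where "y = (\<lambda>k. if k < n then x (\<pi> (inv \<sigma> k)) - \<epsilon> * real (inv \<sigma> k) else 0)"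
  have yv: "y (\<sigma> s) = x (\<pi> s) - \<epsilon> * real s" if "s < n" for s
    using siy[OF that] permutes_inverses(2)[OF si] unfolding y_def by simp
  have ay: "assoc_perm n y \<sigma>"
    unfolding assoc_perm_def
  proof (intro conjI si allI impI)
    fix s t assume st: "s < t \<and> t < n"
    then show "y (\<sigma> t) \<le> y (\<sigma> s)" using yv monox epos
      by (smt (verit) mult_strict_left_mono of_nat_less_iff order.strict_trans)
  next
    fix i j assume h: "i < j \<and> j < n \<and> y i = y j"
    define p where "p = inv \<sigma> i"
    define q where "q = inv \<sigma> j"
    have pn: "p < n" "q < n" unfolding p_def q_def using h isi by auto
    have ip: "i = \<sigma> p" "j = \<sigma> q" unfolding p_def q_def using permutes_inverses(1)[OF si] by auto
    have "p \<noteq> q" using h ip by auto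
    then consider "p < q" | "q < p" by linarith
    then have "y i \<noteq> y j"
    proof cases
      case 1
      then have "\<epsilon> * real p < \<epsilon> * real q" using epos by simp
      then show ?thesis using yv pn ip monox 1 by (smt (verit))
    next
      case 2
      then have "\<epsilon> * real q < \<epsilon> * real p" using epos by simp
      then show ?thesis using yv pn ip monox 2 by (smt (verit))
    qed
    then show "inv \<sigma> i < inv \<sigma> j" using h by simp
  qed
  have ypat: "(y i - y u > a \<longleftrightarrow> x i - x u > a) \<and> y i - y u \<noteq> a"
    if iu: "i < n" "u < n" "i \<noteq> u" "a \<in> A" for i u a
  proof -
    define p where "p = inv \<sigma> i"
    define q where "q = inv \<sigma> u"
    have pn: "p < n" "q < n" unfolding p_def q_def using iu isi by auto
    have ip: "i = \<sigma> p" "u = \<sigma> q" unfolding p_def q_def using permutes_inverses(1)[OF si] by auto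
    have pq: "p \<noteq> q" using iu ip by auto
    have ppq: "\<pi> p \<noteq> \<pi> q" using pq permutes_inj[OF permx] by (metis injD)
    define D where "D = x (\<pi> p) - x (\<pi> q) - a"
    have Dd: "\<delta> \<le> \<bar>D\<bar>" unfolding D_def using dle pix pn ppq iu(4) by blast
    have dif: "y i - y u - a = D - \<epsilon> * (real p - real q)"
      using yv pn ip unfolding D_def by (simp add: algebra_simps)
    have "\<bar>real p - real q\<bar> \<le> real n" using pn by linarith
    then have "\<bar>\<epsilon> * (real p - real q)\<bar> \<le> \<epsilon> * real n" using epos by (simp add: abs_mult)
    then have sm: "\<bar>\<epsilon> * (real p - real q)\<bar> < \<bar>D\<bar>" using esmall Dd by linarith
    have s1: "(y i - y u > a \<longleftrightarrow> D > 0) \<and> y i - y u \<noteq> a" using dif sm by linarith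
    have T1: "Tw n A x (\<pi> p) (\<sigma> p)" "Tw n A x (\<pi> q) (\<sigma> q)" using Tps pn by auto
    have "D > 0 \<longleftrightarrow> x (\<sigma> p) - x (\<pi> q) > a" using T1(1) pix[OF pn(2)] iu(4) unfolding Tw_def D_def by auto
    also have "\<dots> \<longleftrightarrow> x (\<sigma> p) - x (\<sigma> q) > a" using T1(2) siy[OF pn(1)] iu(4) unfolding Tw_def by auto
    finally show ?thesis using s1 ip by simp
  qed
  define g where "g = (\<lambda>t::real. \<lambda>k. (1 - t) * x k + t * y k)"
  have gc: "continuous_on {0..1} g" unfolding g_def
    by (intro continuous_on_coordinatewise_then_product continuous_intros)
  have gC: "g ` {0..1} \<subseteq> ?C"
  proof
    fix z assume "z \<in> g ` {0..1}"
    then obtain t where t: "0 \<le> t" "t \<le> 1" "z = g t" by auto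
    have "z \<in> Rn n" using xC t unfolding arr_complement_def Rn_def g_def y_def by auto
    moreover have "z i - z u \<noteq> a" if iu: "i < n" "u < n" "i \<noteq> u" "a \<in> A" for i u a
    proof -
      have xa: "x i - x u \<noteq> a" using xC iu unfolding arr_complement_def by auto
      have ex: "z i - z u - a = (1 - t) * (x i - x u - a) + t * (y i - y u - a)"
        unfolding t g_def by (simp add: algebra_simps)
      have yp: "(y i - y u > a \<longleftrightarrow> x i - x u > a) \<and> y i - y u \<noteq> a" using ypat iu by blast
      show ?thesis
      proof (cases "x i - x u > a")
        case True
        then have "(1 - t) * (x i - x u - a) + t * (y i - y u - a) > 0"
          using yp t by (intro convex_pos) auto
        then show ?thesis using ex by linarith
      next
        case False
        then have "(1 - t) * (a - (x i - x u)) + t * (a - (y i - y u)) > 0"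
          using yp t xa by (intro convex_pos) auto
        then show ?thesis using ex by (simp add: algebra_simps)
      qed
    qed
    ultimately show "z \<in> ?C" unfolding arr_complement_def by auto
  qed
  have "connected (g ` {0..1})" using gc connected_continuous_image connected_Icc by blast
  moreover have "x \<in> g ` {0..1}" "y \<in> g ` {0..1}"
  proof -
    have "x = g 0" "y = g 1" unfolding g_def by auto
    then show "x \<in> g ` {0..1}" "y \<in> g ` {0..1}" by auto
  qed
  ultimately have "connected_component ?C x y" using gC connected_componentI by blast
  then have "y \<in> \<Omega>" using region_cc[OF reg xO] by simp
  then show ?thesis using ay by blast
qed


theorem lemma2p5:
  fixes n :: nat and A :: "real set" and \<Omega> :: "(nat \<Rightarrow> real) set"
    and x :: "nat \<Rightarrow> real" and \<pi> :: "nat \<Rightarrow> nat"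
  assumes "finite A" and "\<forall>a\<in>A. a > 0"
    and "is_region n A \<Omega>" and "x \<in> \<Omega>" and "assoc_perm n x \<pi>"
  shows "(\<forall>y \<sigma>. y \<in> \<Omega> \<and> assoc_perm n y \<sigma> \<longrightarrow>
            (\<exists>ls1 ls2. is_p_partition n A x \<pi> ls1 \<and> is_p_partition n A y \<sigma> ls2 \<and>
                       part_equiv (block_letters \<pi> ls1) (block_letters \<sigma> ls2)))
       \<and> (\<forall>ls \<sigma> ls'. is_p_partition n A x \<pi> ls \<and> \<sigma> permutes {..<n} \<and> composition n ls' \<and>
            part_equiv (block_letters \<pi> ls) (block_letters \<sigma> ls') \<longrightarrow>
            (\<exists>y\<in>\<Omega>. assoc_perm n y \<sigma>))"
  using part1[OF assms(2,3,4,5)] part2[OF assms] by blast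

end
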